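(* For any $\Delta>0$ there exist a linear mixture MDP structure (feature map and reward) and parameters $\theta^*,\theta^{\mathrm{off},*}$ with $\|\theta^*-\theta^{\mathrm{off},*}\|_2=\Delta$ such that $\sup_\pi|V^\pi_1(s_1)-V^{\mathrm{off},\pi}_1(s_1)|=\Omega(\Delta)$.
   Context: Offline and online linear mixture MDPs share state space, action space, horizon, reward and feature map $\phi$ (with $\sum_{s'}|\phi_j(s'\mid s,a)|\le1$), and have transitions $P(s'\mid s,a)=\langle\theta^*,\phi(s'\mid s,a)\rangle$ and $P^{\mathrm{off}}(s'\mid s,a)=\langle\theta^{\mathrm{off},*},\phi(s'\mid s,a)\rangle$. $V^\pi_1$ and $V^{\mathrm{off},\pi}_1$ are the value functions at stage 1 of policy $\pi$ under $P$ and $P^{\mathrm{off}}$, evaluated at the initial state $s_1$; the supremum is over policies. *)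

theory Defs
  imports "HOL-Analysis.Analysis"
begin

text \<open>Finite-horizon linear mixture MDPs with state space S and action space A
(finite subsets of nat), horizon H (stages 1..H), reward r h s a, feature map
phi s' s a j (j < d, the j-th coordinate of phi(s'|s,a) in R^d) and
parameter theta (coordinates j < d).\<close>

definition lm_trans :: "nat \<Rightarrow> (nat \<Rightarrow> nat \<Rightarrow> nat \<Rightarrow> nat \<Rightarrow> real) \<Rightarrow> (nat \<Rightarrow> real)
    \<Rightarrow> nat \<Rightarrow> nat \<Rightarrow> nat \<Rightarrow> real" where
  "lm_trans d phi theta s' s a = (\<Sum>j<d. theta j * phi s' s a j)"

definition lm_structure :: "nat set \<Rightarrow> nat set \<Rightarrow> nat \<Rightarrow> nat
    \<Rightarrow> (nat \<Rightarrow> nat \<Rightarrow> nat \<Rightarrow> real) \<Rightarrow> (nat \<Rightarrow> nat \<Rightarrow> nat \<Rightarrow> nat \<Rightarrow> real) \<Rightarrow> bool" where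
  "lm_structure S A H d r phi \<longleftrightarrow>
     finite S \<and> S \<noteq> {} \<and> finite A \<and> A \<noteq> {} \<and> H \<ge> 1 \<and>
     (\<forall>h s a. 1 \<le> h \<and> h \<le> H \<and> s \<in> S \<and> a \<in> A \<longrightarrow> 0 \<le> r h s a \<and> r h s a \<le> 1) \<and>
     (\<forall>s a j. s \<in> S \<and> a \<in> A \<and> j < d \<longrightarrow> (\<Sum>s'\<in>S. \<bar>phi s' s a j\<bar>) \<le> 1)"

definition lm_valid_param :: "nat set \<Rightarrow> nat set \<Rightarrow> nat
    \<Rightarrow> (nat \<Rightarrow> nat \<Rightarrow> nat \<Rightarrow> nat \<Rightarrow> real) \<Rightarrow> (nat \<Rightarrow> real) \<Rightarrow> bool" where
  "lm_valid_param S A d phi theta \<longleftrightarrow>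
     (\<forall>s\<in>S. \<forall>a\<in>A. (\<forall>s'\<in>S. 0 \<le> lm_trans d phi theta s' s a) \<and>
                     (\<Sum>s'\<in>S. lm_trans d phi theta s' s a) = 1)"

definition policies :: "nat set \<Rightarrow> nat set \<Rightarrow> nat \<Rightarrow> (nat \<Rightarrow> nat \<Rightarrow> nat) set" where
  "policies S A H = {pol. \<forall>h s. 1 \<le> h \<and> h \<le> H \<and> s \<in> S \<longrightarrow> pol h s \<in> A}"

text \<open>value_togo S H r P pol k s: value of pol from stage H+1-k in state s
(k stages remaining); value_togo ... 0 s = 0 is V_{H+1} = 0.\<close>
fun value_togo :: "nat set \<Rightarrow> nat \<Rightarrow> (nat \<Rightarrow> nat \<Rightarrow> nat \<Rightarrow> real)
    \<Rightarrow> (nat \<Rightarrow> nat \<Rightarrow> nat \<Rightarrow> real) \<Rightarrow> (nat \<Rightarrow> nat \<Rightarrow> nat) \<Rightarrow> nat \<Rightarrow> nat \<Rightarrow> real" where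
  "value_togo S H r P pol 0 s = 0"
| "value_togo S H r P pol (Suc k) s =
     r (H - k) s (pol (H - k) s)
     + (\<Sum>s'\<in>S. P s' s (pol (H - k) s) * value_togo S H r P pol k s')"

definition V1 :: "nat set \<Rightarrow> nat \<Rightarrow> nat \<Rightarrow> (nat \<Rightarrow> nat \<Rightarrow> nat \<Rightarrow> real)
    \<Rightarrow> (nat \<Rightarrow> nat \<Rightarrow> nat \<Rightarrow> nat \<Rightarrow> real) \<Rightarrow> (nat \<Rightarrow> real) \<Rightarrow> (nat \<Rightarrow> nat \<Rightarrow> nat) \<Rightarrow> nat \<Rightarrow> real" where
  "V1 S H d r phi theta pol s = value_togo S H r (lm_trans d phi theta) pol H s"

end

theory Submission
  imports Defs
begin

definition rw :: "nat \<Rightarrow> nat \<Rightarrow> nat \<Rightarrow> real" where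
  "rw h s a = (if s = 1 then 1 else 0)"

lemma vt_abs:
  fixes P :: "nat \<Rightarrow> nat \<Rightarrow> nat \<Rightarrow> real"
  assumes P1: "\<And>s' a. P s' 1 a = (if s' = 1 then 1 else 0)"
      and P2: "\<And>s' a. P s' 2 a = (if s' = 2 then 1 else 0)"
  shows "value_togo {0,1,2} H rw P pol k 1 = real k \<and> value_togo {0,1,2} H rw P pol k 2 = 0"
proof (induction k)
  case 0 then show ?case by simp
next
  case (Suc k)
  have P1': "P s' (Suc 0) a = (if s' = Suc 0 then 1 else 0)" for s' a using P1[of s' a] by simp
  from Suc show ?case by (simp add: P1' P2 rw_def)
qed

lemma vt0:
  fixes P :: "nat \<Rightarrow> nat \<Rightarrow> nat \<Rightarrow> real"
  assumes P1: "\<And>s' a. P s' 1 a = (if s' = 1 then 1 else 0)"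
      and P2: "\<And>s' a. P s' 2 a = (if s' = 2 then 1 else 0)"
      and P0: "\<And>s' a. P s' 0 a = (if s' = 1 then x else if s' = 2 then 1 - x else 0)"
  shows "value_togo {0,1,2} H rw P pol (Suc k) 0 = x * real k"
proof -
  have P0': "P s' 0 a = (if s' = Suc 0 then x else if s' = 2 then 1 - x else 0)" for s' a using P0[of s' a] by simp
  show ?thesis using vt_abs[of P H pol k, OF P1 P2] by (simp add: P0' rw_def)
qed

definition tgt :: "nat \<Rightarrow> nat \<Rightarrow> nat" where
  "tgt j s = (if s = 0 then (if j = 0 then 1 else 2) else s)"

definition phit :: "real \<Rightarrow> nat \<Rightarrow> nat \<Rightarrow> nat \<Rightarrow> nat \<Rightarrow> real" where
  "phit t s' s a j = (if s' = tgt j s then 1 / t else 0)"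

lemma trans_eq: "lm_trans 2 (phit t) th s' s a = th 0 * phit t s' s a 0 + th 1 * phit t s' s a 1"
  unfolding lm_trans_def by (simp add: numeral_2_eq_2)

theorem propositionB2:
  shows "\<exists>c>0. \<forall>\<Delta>::real. \<Delta> > 0 \<longrightarrow>
    (\<exists>S A H d r phi theta theta_off s1.
       lm_structure S A H d r phi \<and> s1 \<in> S \<and>
       lm_valid_param S A d phi theta \<and> lm_valid_param S A d phi theta_off \<and>
       L2_set (\<lambda>j. theta j - theta_off j) {..<d} = \<Delta> \<and>
       (SUP pol\<in>policies S A H.
          \<bar>V1 S H d r phi theta pol s1 - V1 S H d r phi theta_off pol s1\<bar>) \<ge> c * \<Delta>)"
proof (intro exI[of _ "1 / sqrt 2"] conjI allI impI)
  show "0 < 1 / sqrt (2::real)" by simp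
  fix \<Delta> :: real
  assume D: "\<Delta> > 0"
  define u where "u = \<Delta> / sqrt 2"
  define t where "t = max 1 u"
  define m where "m = min 1 u"
  define H where "H = nat \<lceil>u\<rceil> + 2"
  define th :: "nat \<Rightarrow> real" where "th = (\<lambda>j. if j = 0 then t else 0)"
  define tho :: "nat \<Rightarrow> real" where "tho = (\<lambda>j. if j = 0 then t - u else u)"
  have u0: "u > 0" using D by (simp add: u_def)
  have t1: "t \<ge> 1" "t \<ge> u" by (auto simp: t_def)
  have mt: "u / t = m" using u0 by (cases "u \<le> 1") (auto simp: t_def m_def)
  have Hge: "real (H - 1) \<ge> max 1 u"
    unfolding H_def by (simp add: nat_add_distrib; linarith)
  have key: "m * real (H - 1) \<ge> u"
  proof (cases "u \<le> 1")
    case True then show ?thesis using Hge u0 unfolding m_def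
      by (simp add: mult_le_cancel_left1 min_def)
  next
    case False then show ?thesis using Hge unfolding m_def by (simp add: min_def)
  qed
  let ?S = "{0,1,2::nat}"
  let ?A = "{0::nat}"
  have struct: "lm_structure ?S ?A H 2 rw (phit t)"
    unfolding lm_structure_def using t1
    by (auto simp: H_def rw_def phit_def tgt_def)
  have tr: "\<And>th s' s a. lm_trans 2 (phit t) th s' s a =
      (if s' = tgt 0 s then th 0 / t else 0) + (if s' = tgt 1 s then th 1 / t else 0)"
    by (simp add: trans_eq phit_def)
  have v1: "lm_valid_param ?S ?A 2 (phit t) th"
    unfolding lm_valid_param_def tr using t1 by (auto simp: th_def tgt_def)
  have v2: "lm_valid_param ?S ?A 2 (phit t) tho"
    unfolding lm_valid_param_def tr using t1 u0
    by (auto simp: tho_def tgt_def divide_simps)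
  have l2: "L2_set (\<lambda>j. th j - tho j) {..<2} = \<Delta>"
    unfolding L2_set_def using u0 D
    by (simp add: numeral_2_eq_2 th_def tho_def u_def power_divide real_sqrt_divide real_sqrt_mult[symmetric] real_sqrt_abs)
  have Hs: "H = Suc (H - 1)" by (simp add: H_def)
  have V1a: "V1 ?S H 2 rw (phit t) th pol 0 = 1 * real (H - 1)" for pol
    unfolding V1_def
    by (subst Hs, rule vt0) (use t1 in \<open>auto simp: tr th_def tgt_def\<close>)
  have V1b: "V1 ?S H 2 rw (phit t) tho pol 0 = (1 - m) * real (H - 1)" for pol
  proof -
    have e: "(t - u) / t = 1 - m" using mt t1 by (simp add: diff_divide_distrib)
    show ?thesis unfolding V1_def
      by (subst Hs, rule vt0) (use t1 e mt in \<open>auto simp: tr tho_def tgt_def\<close>)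
  qed
  have diff: "\<bar>V1 ?S H 2 rw (phit t) th pol 0 - V1 ?S H 2 rw (phit t) tho pol 0\<bar> = m * real (H - 1)" for pol
  proof -
    have "m * real (H - 1) > 0" using key u0 by linarith
    moreover have "1 * real (H - 1) - (1 - m) * real (H - 1) = m * real (H - 1)" by (simp add: algebra_simps)
    ultimately show ?thesis unfolding V1a V1b by (simp only:)
  qed
  have ne: "policies ?S ?A H \<noteq> {}"
    unfolding policies_def by (rule ccontr) (auto dest: spec[of _ "\<lambda>h s. 0"])
  have sup: "(SUP pol\<in>policies ?S ?A H.
          \<bar>V1 ?S H 2 rw (phit t) th pol 0 - V1 ?S H 2 rw (phit t) tho pol 0\<bar>) = m * real (H - 1)"
    unfolding diff using ne by simp
  have "1 / sqrt 2 * \<Delta> = u" by (simp add: u_def)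
  then show "\<exists>S A H d r phi theta theta_off s1.
       lm_structure S A H d r phi \<and> s1 \<in> S \<and>
       lm_valid_param S A d phi theta \<and> lm_valid_param S A d phi theta_off \<and>
       L2_set (\<lambda>j. theta j - theta_off j) {..<d} = \<Delta> \<and>
       (SUP pol\<in>policies S A H.
          \<bar>V1 S H d r phi theta pol s1 - V1 S H d r phi theta_off pol s1\<bar>) \<ge> 1 / sqrt 2 * \<Delta>"
    using struct v1 v2 l2 sup key by (intro exI[of _ ?S] exI[of _ ?A] exI[of _ H] exI[of _ 2]
        exI[of _ rw] exI[of _ "phit t"] exI[of _ th] exI[of _ tho] exI[of _ 0]) auto
qed

end
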